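(* Let $t\ge 2$ be an integer and let $G$ be a finite simple graph. Then \[ N(G,K_t)\;\le\;\sum_{e\in E(G)}\frac{\binom{p(e)+1}{t}}{\binom{p(e)+1}{2}}\;=\;\frac{1}{\binom{t}{2}}\sum_{e\in E(G)}\binom{p(e)-1}{t-2}. \] If $t=2$, equality always holds. If $t\ge 3$, equality holds if and only if every connected component of $G$ is either a complete graph or contains no path of length $t-1$.
   Context: $N(G,K_t)$ denotes the number of subgraphs of $G$ isomorphic to $K_t$. The length of a path is its number of edges. For an edge $e\in E(G)$, $p(e)$ denotes the length of a longest path in $G$ containing the edge $e$ (so $p(e)\ge 1$). Binomial coefficients $\binom{a}{b}$ with $0\le a<b$ are $0$. *)

theory Defs
  imports Complex_Main
begin

definition simple_graph :: "'a set \<Rightarrow> 'a set set \<Rightarrow> bool" where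
  "simple_graph V E \<longleftrightarrow> finite V \<and> (\<forall>e\<in>E. e \<subseteq> V \<and> card e = 2)"

definition adj :: "'a set set \<Rightarrow> 'a \<Rightarrow> 'a \<Rightarrow> bool" where
  "adj E u v \<longleftrightarrow> {u, v} \<in> E"

text \<open>A path is a nonempty list of distinct vertices with consecutive vertices adjacent;
  its length is its number of edges, i.e. length xs - 1.\<close>
definition is_path :: "'a set \<Rightarrow> 'a set set \<Rightarrow> 'a list \<Rightarrow> bool" where
  "is_path V E xs \<longleftrightarrow> xs \<noteq> [] \<and> distinct xs \<and> set xs \<subseteq> V \<and>
     (\<forall>i. Suc i < length xs \<longrightarrow> adj E (xs ! i) (xs ! Suc i))"

definition path_contains_edge :: "'a list \<Rightarrow> 'a set \<Rightarrow> bool" where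
  "path_contains_edge xs e \<longleftrightarrow> (\<exists>i. Suc i < length xs \<and> {xs ! i, xs ! Suc i} = e)"

definition longest_path_through :: "'a set \<Rightarrow> 'a set set \<Rightarrow> 'a set \<Rightarrow> nat" where
  "longest_path_through V E e =
     Max {length xs - 1 | xs. is_path V E xs \<and> path_contains_edge xs e}"

text \<open>N(G,K_t): number of subgraphs isomorphic to K_t, i.e. number of t-cliques.\<close>
definition clique_count :: "'a set \<Rightarrow> 'a set set \<Rightarrow> nat \<Rightarrow> nat" where
  "clique_count V E t =
     card {S. S \<subseteq> V \<and> card S = t \<and> (\<forall>u\<in>S. \<forall>v\<in>S. u \<noteq> v \<longrightarrow> adj E u v)}"

definition components :: "'a set \<Rightarrow> 'a set set \<Rightarrow> 'a set set" where
  "components V E = {{u \<in> V. (adj E)\<^sup>*\<^sup>* v u} | v. v \<in> V}"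

definition is_complete_on :: "'a set set \<Rightarrow> 'a set \<Rightarrow> bool" where
  "is_complete_on E C \<longleftrightarrow> (\<forall>u\<in>C. \<forall>v\<in>C. u \<noteq> v \<longrightarrow> adj E u v)"

definition has_path_of_length_in :: "'a set \<Rightarrow> 'a set set \<Rightarrow> 'a set \<Rightarrow> nat \<Rightarrow> bool" where
  "has_path_of_length_in V E C k \<longleftrightarrow> (\<exists>xs. is_path V E xs \<and> set xs \<subseteq> C \<and> length xs = k + 1)"

end

theory Submission imports Defs begin

lemma F_nat_id:
  assumes "t \<ge> 2" "k \<ge> 1"
  shows "(Suc k choose t) * (t choose 2) = (Suc k choose 2) * ((k - 1) choose (t - 2))"
proof (cases "t \<le> Suc k")
  case True
  then show ?thesis using choose_mult[of 2 t "Suc k"] assms by (simp add: numeral_2_eq_2)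
next
  case False
  then have "Suc k choose t = 0" "(k - 1) choose (t - 2) = 0" using assms by auto
  then show ?thesis by (metis mult_0 mult_0_right)
qed

lemma binom_suc_aux: "(a choose Suc k) * Suc k = (a choose k) * (a - k)"
  using binomial_absorption[of k a] binomial_absorb_comp[of a k] by (simp add: mult.commute)

lemma pow2_binom: "2 ^ k * (a choose k) \<le> (2 * a) choose k"
proof (induction k)
  case 0 then show ?case by simp
next
  case (Suc k)
  have "2 ^ Suc k * (a choose Suc k) * Suc k = 2 * 2 ^ k * ((a choose Suc k) * Suc k)"
    by (simp only: mult_ac power_Suc)
  also have "\<dots> = 2 * (2 ^ k * (a choose k)) * (a - k)"
    unfolding binom_suc_aux by (simp add: mult_ac)
  also have "\<dots> \<le> 2 * ((2 * a) choose k) * (a - k)" using Suc by simp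
  also have "\<dots> \<le> ((2 * a) choose k) * (2 * a - k)"
  proof -
    have hh: "2 * (a - k) \<le> 2 * a - k" by arith
    show ?thesis using mult_le_mono2[OF hh, of "(2*a) choose k"] by (simp add: mult_ac)
  qed
  also have "\<dots> = ((2 * a) choose Suc k) * Suc k"
    using binom_suc_aux[of "2*a" k] by simp
  finally show ?case by (metis mult_le_cancel2 zero_less_Suc)
qed

lemma pow2_gt: "k \<ge> 1 \<Longrightarrow> k + 2 < (2::nat) ^ (k + 1)"
proof (induction k)
  case 0 then show ?case by simp
next
  case (Suc k)
  then show ?case by (cases "k = 0") auto
qed

lemma key_ineq:
  assumes "t \<ge> 3" "1 \<le> d" "2 * d \<le> L" "t - 1 \<le> L"
  shows "(d choose (t - 1)) * (t choose 2) < d * ((L - 1) choose (t - 2))"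
proof -
  define k where "k = t - 2"
  have k1: "k \<ge> 1" and tk: "t = k + 2" using assms(1) by (auto simp: k_def)
  have h0: "(t - 1) * (d choose (t - 1)) = d * ((d - 1) choose (t - 1 - 1))"
    using times_binomial_minus1_eq[of "t-1" d] assms(1) by simp
  have "t - 1 - 1 = k" by (simp add: k_def)
  then have h1: "(t - 1) * (d choose (t - 1)) = d * ((d - 1) choose k)" using h0 by simp
  have h2: "(t choose 2) * 2 = t * (t - 1)"
    using times_binomial_minus1_eq[of 2 t] times_binomial_minus1_eq[of 1 "t-1"] assms(1)
    by (simp add: mult.commute)
  have main: "t * ((d - 1) choose k) < 2 * ((L - 1) choose k)"
  proof (cases "d - 1 < k")
    case True
    then have "(d - 1) choose k = 0" by simp
    moreover have "0 < (L - 1) choose k" using assms tk by simp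
    ultimately show ?thesis by (metis mult_0_right mult_pos_pos zero_less_numeral)
  next
    case False
    then have pos: "0 < (d - 1) choose k" by simp
    have "t * ((d - 1) choose k) < 2 ^ (k + 1) * ((d - 1) choose k)"
      using mult_less_mono1[OF pow2_gt[OF k1] pos] tk by simp
    also have "\<dots> = 2 * (2 ^ k * ((d - 1) choose k))" by simp
    also have "\<dots> \<le> 2 * ((2 * (d - 1)) choose k)" using pow2_binom by simp
    also have "\<dots> \<le> 2 * ((L - 1) choose k)"
      using binomial_right_mono[of "2 * (d - 1)" "L - 1" k] assms by simp
    finally show ?thesis .
  qed
  have "(d choose (t - 1)) * (t choose 2) * 2 * (t - 1) = ((t choose 2) * 2) * ((t - 1) * (d choose (t - 1)))"
    by (simp only: mult_ac)
  also have "\<dots> = t * (t - 1) * (d * ((d - 1) choose k))" by (simp only: h1 h2)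
  also have "\<dots> = d * (t * ((d - 1) choose k)) * (t - 1)" by (simp only: mult_ac)
  also have "\<dots> < d * (2 * ((L - 1) choose k)) * (t - 1)"
    using main assms by simp
  finally show ?thesis by (simp add: k_def)
qed


lemma adj_sym: "adj E u v \<longleftrightarrow> adj E v u"
  by (simp add: adj_def insert_commute)

lemma sg_adj:
  assumes "simple_graph V E" "adj E u v"
  shows "u \<in> V" "v \<in> V" "u \<noteq> v"
  using assms unfolding simple_graph_def adj_def by (auto simp: card_2_iff)

lemma sg_edge:
  assumes "simple_graph V E" "e \<in> E"
  obtains u v where "e = {u,v}" "u \<noteq> v" "u \<in> V" "v \<in> V" "adj E u v"
  using assms unfolding simple_graph_def adj_def by (auto simp: card_2_iff)

lemma is_path_alt:
  "is_path V E xs \<longleftrightarrow> xs \<noteq> [] \<and> distinct xs \<and> set xs \<subseteq> V \<and> successively (adj E) xs"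
  unfolding is_path_def successively_conv_nth by blast

lemma pce_alt:
  "path_contains_edge xs e \<longleftrightarrow> (\<exists>as x y bs. xs = as @ x # y # bs \<and> e = {x,y})"
proof
  assume "path_contains_edge xs e"
  then obtain i where i: "Suc i < length xs" "{xs ! i, xs ! Suc i} = e"
    unfolding path_contains_edge_def by blast
  have "xs = take i xs @ xs ! i # xs ! Suc i # drop (Suc (Suc i)) xs"
    using i(1) by (metis Cons_nth_drop_Suc Suc_lessD append_take_drop_id)
  then show "\<exists>as x y bs. xs = as @ x # y # bs \<and> e = {x,y}" using i(2) by blast
next
  assume "\<exists>as x y bs. xs = as @ x # y # bs \<and> e = {x,y}"
  then obtain as x y bs where "xs = as @ x # y # bs" "e = {x,y}" by blast
  then show "path_contains_edge xs e" unfolding path_contains_edge_def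
    by (intro exI[of _ "length as"]) (auto simp: nth_append)
qed

lemma path_length_le:
  assumes "finite V" "is_path V E xs" shows "length xs \<le> card V"
  using assms unfolding is_path_def by (metis card_mono distinct_card)

lemma finite_paths:
  assumes "finite V" shows "finite {xs. is_path V E xs}"
proof -
  have "{xs. is_path V E xs} \<subseteq> {xs. set xs \<subseteq> V \<and> length xs \<le> card V}"
    using path_length_le[OF assms] unfolding is_path_def by blast
  then show ?thesis using finite_lists_length_le[OF assms] by (rule finite_subset)
qed

lemma lpt_ge:
  assumes "simple_graph V E" "is_path V E xs" "path_contains_edge xs e"
  shows "length xs - 1 \<le> longest_path_through V E e"
proof -
  have "finite {length xs - 1 | xs. is_path V E xs \<and> path_contains_edge xs e}"
    using finite_paths[of V E] assms(1) unfolding simple_graph_def by auto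
  then show ?thesis unfolding longest_path_through_def using assms by (intro Max_ge) auto
qed

lemma lpt_le:
  assumes "simple_graph V E" "is_path V E ys" "path_contains_edge ys e"
    "\<And>xs. is_path V E xs \<Longrightarrow> path_contains_edge xs e \<Longrightarrow> length xs - 1 \<le> k"
  shows "longest_path_through V E e \<le> k"
proof -
  have "finite {length xs - 1 | xs. is_path V E xs \<and> path_contains_edge xs e}"
    using finite_paths[of V E] assms(1) unfolding simple_graph_def by auto
  then show ?thesis unfolding longest_path_through_def using assms
    by (subst Max_le_iff) auto
qed

lemma edge_path:
  assumes "simple_graph V E" "e \<in> E"
  obtains u v where "e = {u,v}" "is_path V E [u,v]" "path_contains_edge [u,v] e"
proof -
  obtain u v where "e = {u,v}" "u \<noteq> v" "u \<in> V" "v \<in> V" "adj E u v"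
    using sg_edge[OF assms] .
  then show ?thesis using that[of u v]
    unfolding is_path_alt pce_alt by (auto intro!: exI[of _ "[]"])
qed

lemma lpt_pos:
  assumes "simple_graph V E" "e \<in> E"
  shows "1 \<le> longest_path_through V E e"
proof -
  obtain u v where "e = {u,v}" "is_path V E [u,v]" "path_contains_edge [u,v] e"
    using edge_path[OF assms] .
  then show ?thesis using lpt_ge[OF assms(1)] by fastforce
qed

lemma path_rev: "is_path V E xs \<Longrightarrow> is_path V E (rev xs)"
  unfolding is_path_alt by (auto simp: adj_sym cong: successively_cong)

lemma path_take: "is_path V E xs \<Longrightarrow> k \<ge> 1 \<Longrightarrow> is_path V E (take k xs)"
  unfolding is_path_alt
  by (metis append_take_drop_id distinct_take not_one_le_zero set_take_subset
      subset_trans successively_append_iff take_eq_Nil)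

lemma path_Cons: "is_path V E xs \<Longrightarrow> z \<in> V \<Longrightarrow> z \<notin> set xs \<Longrightarrow> adj E z (hd xs) \<Longrightarrow> is_path V E (z # xs)"
  unfolding is_path_alt by (auto simp: successively_Cons)

lemma path_reach:
  assumes "successively (adj E) xs" "y \<in> set xs" "xs \<noteq> []"
  shows "(adj E)\<^sup>*\<^sup>* (hd xs) y"
  using assms
proof (induction xs)
  case (Cons x ys)
  show ?case
  proof (cases "ys = [] \<or> y = x")
    case True
    then show ?thesis using Cons.prems by auto
  next
    case False
    then have "successively (adj E) ys" "adj E x (hd ys)" "y \<in> set ys"
      using Cons.prems by (auto simp: successively_Cons)
    then show ?thesis using Cons.IH False by (auto intro: converse_rtranclp_into_rtranclp)
  qed
qed auto

lemma symp_adj: "symp (adj E)"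
  by (meson adj_sym sympI)

lemma rtranclp_adj_sym: "(adj E)\<^sup>*\<^sup>* u v \<Longrightarrow> (adj E)\<^sup>*\<^sup>* v u"
  by (meson symp_adj symp_rtranclp sympD)

lemma path_rotate:
  assumes "is_path V E xs" "0 < i" "i < length xs" "adj E (hd xs) (xs ! i)"
  shows "is_path V E (rev (take i xs) @ drop i xs)" "path_contains_edge (rev (take i xs) @ drop i xs) {hd xs, xs ! i}"
    "length (rev (take i xs) @ drop i xs) = length xs"
proof -
  have d: "distinct xs" "set xs \<subseteq> V" "successively (adj E) xs" "xs \<noteq> []"
    using assms(1) unfolding is_path_alt by auto
  have s1: "successively (adj E) (take i xs)" "successively (adj E) (drop i xs)"
    using d(3) by (metis append_take_drop_id successively_append_iff)+
  have lt: "last (rev (take i xs)) = hd xs" using assms(2) d(4) by (simp add: hd_take last_rev)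
  have hdd: "hd (drop i xs) = xs ! i" using assms(3) by (simp add: hd_drop_conv_nth)
  have "distinct (rev (take i xs) @ drop i xs)"
    using d(1) by (metis append_take_drop_id distinct_append distinct_rev set_rev)
  moreover have "set (rev (take i xs) @ drop i xs) = set xs"
    by (metis append_take_drop_id set_append set_rev)
  moreover have "successively (adj E) (rev (take i xs) @ drop i xs)"
    using s1 lt hdd assms(4) by (auto simp: successively_append_iff adj_sym cong: successively_cong)
  ultimately show "is_path V E (rev (take i xs) @ drop i xs)"
    using d unfolding is_path_alt by auto
  have "rev (take i xs) @ drop i xs = butlast (rev (take i xs)) @ hd xs # xs ! i # drop (Suc i) xs"
    using lt assms(2,3) d(4)
    by (metis Cons_nth_drop_Suc append.assoc append_butlast_last_id append_Cons append_Nil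
        rev_is_Nil_conv take_eq_Nil2 not_gr_zero)
  then show "path_contains_edge (rev (take i xs) @ drop i xs) {hd xs, xs ! i}"
    unfolding pce_alt by blast
  show "length (rev (take i xs) @ drop i xs) = length xs" using assms(3) by simp
qed

definition cyc :: "'a set set \<Rightarrow> 'a list \<Rightarrow> bool" where
  "cyc E cs \<longleftrightarrow> cs \<noteq> [] \<and> successively (adj E) (cs @ [hd cs])"

lemma cyc_rot: "cyc E (as @ w # bs) \<Longrightarrow> cyc E (w # bs @ as)"
  unfolding cyc_def
  by (cases as; cases bs) (auto simp: successively_append_iff successively_Cons hd_append)

lemma cyc_path: "cyc E cs \<Longrightarrow> distinct cs \<Longrightarrow> set cs \<subseteq> V \<Longrightarrow> is_path V E cs"
  unfolding cyc_def is_path_alt by (auto simp: successively_append_iff)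

lemma cyc_chord:
  assumes "cyc E (u # as @ v # bs)" "adj E u v"
  shows "successively (adj E) (as @ v # u # rev bs)"
proof -
  have s: "successively (adj E) (u # as @ v # bs @ [u])" using assms(1) unfolding cyc_def by simp
  have a: "successively (adj E) (as @ [v])"
    using s by (auto simp: successively_append_iff successively_Cons)
  have b: "successively (adj E) (v # bs @ [u])"
    using s by (auto simp: successively_append_iff successively_Cons)
  then have b1: "successively (adj E) bs" "bs \<noteq> [] \<Longrightarrow> adj E (last bs) u"
    by (auto simp: successively_append_iff successively_Cons)
  have c: "successively (adj E) (u # rev bs)"
    using b1 by (cases "bs = []") (auto simp: successively_Cons adj_sym hd_rev cong: successively_cong)
  have "successively (adj E) ((as @ [v]) @ (u # rev bs))"
    using a c assms(2) by (subst successively_append_iff) (auto simp: adj_sym)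
  then show ?thesis by simp
qed

definition del :: "'a set set \<Rightarrow> 'a set \<Rightarrow> 'a set set" where
  "del E X = {e\<in>E. e \<inter> X = {}}"

lemma sg_del: "simple_graph V E \<Longrightarrow> simple_graph (V - X) (del E X)"
  unfolding simple_graph_def del_def by auto

lemma adj_del: "adj (del E X) u v \<longleftrightarrow> adj E u v \<and> u \<notin> X \<and> v \<notin> X"
  unfolding adj_def del_def by auto

lemma path_del: "is_path (V - X) (del E X) xs \<longleftrightarrow> is_path V E xs \<and> set xs \<inter> X = {}"
proof
  assume "is_path (V - X) (del E X) xs"
  then show "is_path V E xs \<and> set xs \<inter> X = {}"
    unfolding is_path_alt by (auto simp: adj_del intro: successively_mono[of "adj (del E X)"])
next
  assume a: "is_path V E xs \<and> set xs \<inter> X = {}"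
  then have "successively (adj (del E X)) xs"
    unfolding is_path_alt by (auto simp: adj_del intro: successively_mono[of "adj E"])
  then show "is_path (V - X) (del E X) xs" using a unfolding is_path_alt by auto
qed

lemma lpt_del_le:
  assumes "simple_graph V E" "e \<in> del E X"
  shows "longest_path_through (V - X) (del E X) e \<le> longest_path_through V E e"
proof -
  have sg: "simple_graph (V - X) (del E X)" using sg_del[OF assms(1)] .
  obtain u v where "e = {u,v}" "is_path (V - X) (del E X) [u,v]" "path_contains_edge [u,v] e"
    using edge_path[OF sg assms(2)] .
  then show ?thesis
  proof (intro lpt_le[OF sg])
    fix xs assume "is_path (V - X) (del E X) xs" "path_contains_edge xs e"
    then show "length xs - 1 \<le> longest_path_through V E e"
      using lpt_ge[OF assms(1)] by (simp add: path_del)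
  qed
qed

definition cl :: "'a set \<Rightarrow> 'a set set \<Rightarrow> nat \<Rightarrow> 'a set set" where
  "cl V E t = {S. S \<subseteq> V \<and> card S = t \<and> is_complete_on E S}"

lemma clique_count_cl: "clique_count V E t = card (cl V E t)"
  unfolding clique_count_def cl_def is_complete_on_def by simp

lemma finite_cl: "finite V \<Longrightarrow> finite (cl V E t)"
  unfolding cl_def by (rule finite_subset[of _ "Pow V"]) auto

lemma cl_del: "cl (V - X) (del E X) t = {S \<in> cl V E t. S \<inter> X = {}}"
  unfolding cl_def is_complete_on_def by (auto simp: adj_del)

definition closedset :: "'a set set \<Rightarrow> 'a set \<Rightarrow> bool" where
  "closedset E C \<longleftrightarrow> (\<forall>u v. adj E u v \<longrightarrow> (u \<in> C \<longleftrightarrow> v \<in> C))"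

lemma closedsetD: "closedset E C \<Longrightarrow> adj E u v \<Longrightarrow> (u \<in> C \<longleftrightarrow> v \<in> C)"
  by (simp add: closedset_def)

lemma succ_closed:
  assumes "successively (adj E) xs" "closedset E C"
  shows "set xs \<subseteq> C \<or> set xs \<inter> C = {}"
  using assms
proof (induction xs)
  case (Cons x ys)
  then show ?case
    by (cases ys) (auto simp: successively_Cons dest: closedsetD)
qed auto

lemma lpt_closed_eq:
  assumes "simple_graph V E" "closedset E C" "e \<in> del E C"
  shows "longest_path_through (V - C) (del E C) e = longest_path_through V E e"
proof (rule antisym)
  show "longest_path_through (V - C) (del E C) e \<le> longest_path_through V E e"
    using lpt_del_le[OF assms(1,3)] .
  have sg: "simple_graph (V - C) (del E C)" using sg_del[OF assms(1)] .
  have eE: "e \<in> E" and eC: "e \<inter> C = {}" using assms(3) by (auto simp: del_def)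
  obtain u v where uv: "e = {u,v}" "is_path V E [u,v]" "path_contains_edge [u,v] e"
    using edge_path[OF assms(1) eE] .
  show "longest_path_through V E e \<le> longest_path_through (V - C) (del E C) e"
  proof (rule lpt_le[OF assms(1) uv(2,3)])
    fix xs assume xs: "is_path V E xs" "path_contains_edge xs e"
    then have "e \<subseteq> set xs" unfolding pce_alt by auto
    moreover have "set xs \<subseteq> C \<or> set xs \<inter> C = {}"
      using xs(1) assms(2) succ_closed unfolding is_path_alt by blast
    ultimately have "set xs \<inter> C = {}" using eC uv(1) by auto
    then have "is_path (V - C) (del E C) xs" using xs(1) by (simp add: path_del)
    then show "length xs - 1 \<le> longest_path_through (V - C) (del E C) e"
      using lpt_ge[OF sg _ xs(2)] by blast
  qed
qed

lemma edges_split: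
  assumes "simple_graph V E" "closedset E C"
  shows "E = {e\<in>E. e \<subseteq> C} \<union> del E C" "{e\<in>E. e \<subseteq> C} \<inter> del E C = {}"
proof -
  show "{e\<in>E. e \<subseteq> C} \<inter> del E C = {}"
  proof (rule ccontr)
    assume "{e\<in>E. e \<subseteq> C} \<inter> del E C \<noteq> {}"
    then obtain e where e: "e \<in> E" "e \<subseteq> C" "e \<inter> C = {}" unfolding del_def by blast
    then have "e = {}" by blast
    moreover have "card e = 2" using assms(1) e(1) unfolding simple_graph_def by blast
    ultimately show False by simp
  qed
  show "E = {e\<in>E. e \<subseteq> C} \<union> del E C"
  proof (rule set_eqI)
    fix e show "e \<in> E \<longleftrightarrow> e \<in> {e\<in>E. e \<subseteq> C} \<union> del E C"
    proof
      assume eE: "e \<in> E"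
      then obtain u v where uv: "e = {u,v}" "adj E u v" using sg_edge[OF assms(1)] by metis
      have "u \<in> C \<longleftrightarrow> v \<in> C" using closedsetD[OF assms(2) uv(2)] .
      then have "e \<subseteq> C \<or> e \<inter> C = {}" using uv(1) by blast
      then show "e \<in> {e\<in>E. e \<subseteq> C} \<union> del E C" using eE unfolding del_def by blast
    qed (auto simp: del_def)
  qed
qed

lemma completeD: "is_complete_on E S \<Longrightarrow> u \<in> S \<Longrightarrow> v \<in> S \<Longrightarrow> u \<noteq> v \<Longrightarrow> adj E u v"
  by (simp add: is_complete_on_def)

lemma cliques_split:
  assumes "closedset E C" "S \<in> cl V E t" "t \<ge> 1"
  shows "S \<subseteq> C \<or> S \<inter> C = {}"
proof -
  have cS: "card S = t" and cp: "is_complete_on E S" using assms(2) unfolding cl_def by auto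
  have "S \<noteq> {}" using cS assms(3) by auto
  then obtain u where u: "u \<in> S" by blast
  have "v \<in> C \<longleftrightarrow> u \<in> C" if "v \<in> S" for v
  proof (cases "v = u")
    case False
    then have "adj E u v" using completeD[OF cp u that] by simp
    then show ?thesis using closedsetD[OF assms(1)] by simp
  next
    case True then show ?thesis by simp
  qed
  then show ?thesis by (cases "u \<in> C") auto
qed

lemma comp_closed:
  assumes "closedset E C" "(adj E)\<^sup>*\<^sup>* v u"
  shows "v \<in> C \<longleftrightarrow> u \<in> C"
  using assms(2)
proof (induction rule: rtranclp_induct)
  case (step y z)
  have "y \<in> C \<longleftrightarrow> z \<in> C" using closedsetD[OF assms(1) step.hyps(2)] .
  then show ?case using step.IH by simp
qed simp

lemma reach_del:
  assumes "closedset E C" "v \<notin> C"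
  shows "(adj E)\<^sup>*\<^sup>* v u \<longleftrightarrow> (adj (del E C))\<^sup>*\<^sup>* v u"
proof
  assume "(adj E)\<^sup>*\<^sup>* v u"
  then show "(adj (del E C))\<^sup>*\<^sup>* v u"
  proof (induction rule: rtranclp_induct)
    case (step y z)
    have "y \<notin> C" using comp_closed[OF assms(1) step.hyps(1)] assms(2) by blast
    then have "z \<notin> C" using closedsetD[OF assms(1) step.hyps(2)] by simp
    then have "adj (del E C) y z" using \<open>y \<notin> C\<close> step.hyps(2) by (simp add: adj_del)
    then show ?case using step.IH by (simp add: rtranclp.rtrancl_into_rtrancl)
  qed simp
next
  assume "(adj (del E C))\<^sup>*\<^sup>* v u"
  then show "(adj E)\<^sup>*\<^sup>* v u"
  proof (induction rule: rtranclp_induct)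
    case (step y z)
    then have "adj E y z" by (simp add: adj_del)
    then show ?case using step.IH by (simp add: rtranclp.rtrancl_into_rtrancl)
  qed simp
qed

lemma components_split:
  assumes "closedset E C" "C \<subseteq> V" "x0 \<in> C" "\<forall>u\<in>C. (adj E)\<^sup>*\<^sup>* x0 u"
  shows "components V E = insert C (components (V - C) (del E C))"
proof -
  have cv: "{u \<in> V. (adj E)\<^sup>*\<^sup>* v u} = C" if v: "v \<in> C" for v
  proof
    show "{u \<in> V. (adj E)\<^sup>*\<^sup>* v u} \<subseteq> C"
    proof
      fix u assume "u \<in> {u \<in> V. (adj E)\<^sup>*\<^sup>* v u}"
      then have "(adj E)\<^sup>*\<^sup>* v u" by simp
      from comp_closed[OF assms(1) this] v show "u \<in> C" by simp
    qed
    show "C \<subseteq> {u \<in> V. (adj E)\<^sup>*\<^sup>* v u}"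
    proof
      fix u assume u: "u \<in> C"
      have "(adj E)\<^sup>*\<^sup>* x0 v" using assms(4) v by simp
      then have "(adj E)\<^sup>*\<^sup>* v x0" by (rule rtranclp_adj_sym)
      moreover have "(adj E)\<^sup>*\<^sup>* x0 u" using assms(4) u by simp
      ultimately have "(adj E)\<^sup>*\<^sup>* v u" by (rule rtranclp_trans)
      then show "u \<in> {u \<in> V. (adj E)\<^sup>*\<^sup>* v u}" using u assms(2) by auto
    qed
  qed
  have ov: "{u \<in> V. (adj E)\<^sup>*\<^sup>* v u} = {u \<in> V - C. (adj (del E C))\<^sup>*\<^sup>* v u}" if v: "v \<notin> C" for v
  proof -
    have "(adj E)\<^sup>*\<^sup>* v u \<longleftrightarrow> u \<notin> C \<and> (adj (del E C))\<^sup>*\<^sup>* v u" for u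
      using reach_del[OF assms(1) v, of u] comp_closed[OF assms(1), of v u] v by auto
    then show ?thesis by auto
  qed
  show ?thesis
  proof (rule set_eqI)
    fix X
    show "X \<in> components V E \<longleftrightarrow> X \<in> insert C (components (V - C) (del E C))"
    proof
      assume "X \<in> components V E"
      then obtain v where v: "v \<in> V" "X = {u \<in> V. (adj E)\<^sup>*\<^sup>* v u}"
        unfolding components_def by blast
      show "X \<in> insert C (components (V - C) (del E C))"
      proof (cases "v \<in> C")
        case True then show ?thesis using cv v by simp
      next
        case False then show ?thesis using ov[OF False] v unfolding components_def by blast
      qed
    next
      assume "X \<in> insert C (components (V - C) (del E C))"
      then show "X \<in> components V E"
      proof
        assume "X = C"
        then show ?thesis using cv[OF assms(3)] assms(2,3) unfolding components_def by blast
      next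
        assume "X \<in> components (V - C) (del E C)"
        then obtain v where v: "v \<in> V - C" "X = {u \<in> V - C. (adj (del E C))\<^sup>*\<^sup>* v u}"
          unfolding components_def by blast
        then show ?thesis using ov[of v] unfolding components_def by auto
      qed
    qed
  qed
qed

definition nbrs :: "'a set set \<Rightarrow> 'a \<Rightarrow> 'a set" where
  "nbrs E x = {v. adj E x v}"

lemma finite_nbrs: "simple_graph V E \<Longrightarrow> finite (nbrs E x)"
  unfolding nbrs_def using sg_adj(2) simple_graph_def
  by (metis (no_types, lifting) finite_subset mem_Collect_eq subsetI)

lemma card_sup_le:
  assumes "finite D" "finite e"
  shows "card {S. e \<subseteq> S \<and> S \<subseteq> D \<and> card S = t} \<le> card (D - e) choose (t - card e)"
proof -
  let ?A = "{S. e \<subseteq> S \<and> S \<subseteq> D \<and> card S = t}"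
  let ?B = "{X. X \<subseteq> D - e \<and> card X = t - card e}"
  have inj: "inj_on (\<lambda>S. S - e) ?A"
  proof (rule inj_onI)
    fix S T assume "S \<in> ?A" "T \<in> ?A" "S - e = T - e"
    then have "S = (S - e) \<union> e" "T = (T - e) \<union> e" by auto
    then show "S = T" using \<open>S - e = T - e\<close> by metis
  qed
  have img: "(\<lambda>S. S - e) ` ?A \<subseteq> ?B"
  proof
    fix X assume "X \<in> (\<lambda>S. S - e) ` ?A"
    then obtain S where S: "S \<in> ?A" "X = S - e" by blast
    then have "card X = card S - card e" using card_Diff_subset[OF assms(2)] by auto
    then show "X \<in> ?B" using S by auto
  qed
  have "card ?A \<le> card ?B"
    using card_inj_on_le[OF inj img] assms(1) by simp
  also have "\<dots> = card (D - e) choose (t - card e)"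
    using n_subsets[of "D - e"] assms(1) by simp
  finally show ?thesis .
qed

lemma card_cl_at:
  assumes "simple_graph V E" "t \<ge> 1"
  shows "card {S \<in> cl V E t. x \<in> S} \<le> card (nbrs E x) choose (t - 1)"
proof -
  let ?A = "{S \<in> cl V E t. x \<in> S}"
  let ?B = "{X. X \<subseteq> nbrs E x \<and> card X = t - 1}"
  have inj: "inj_on (\<lambda>S. S - {x}) ?A"
  proof (rule inj_onI)
    fix S T assume "S \<in> ?A" "T \<in> ?A" "S - {x} = T - {x}"
    then have "S = insert x (S - {x})" "T = insert x (T - {x})" by auto
    then show "S = T" using \<open>S - {x} = T - {x}\<close> by metis
  qed
  have img: "(\<lambda>S. S - {x}) ` ?A \<subseteq> ?B"
  proof
    fix X assume "X \<in> (\<lambda>S. S - {x}) ` ?A"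
    then obtain S where S: "S \<in> cl V E t" "x \<in> S" "X = S - {x}" by blast
    have cp: "is_complete_on E S" and cS: "card S = t" using S(1) unfolding cl_def by auto
    have "X \<subseteq> nbrs E x"
    proof
      fix v assume "v \<in> X"
      then have "v \<in> S" "v \<noteq> x" using S by auto
      then show "v \<in> nbrs E x" using completeD[OF cp S(2)] unfolding nbrs_def by simp
    qed
    moreover have "card X = t - 1" using S(2,3) cS by simp
    ultimately show "X \<in> ?B" by simp
  qed
  have "card ?A \<le> card ?B"
    using card_inj_on_le[OF inj img] finite_nbrs[OF assms(1)] by simp
  also have "\<dots> = card (nbrs E x) choose (t - 1)"
    using n_subsets[OF finite_nbrs[OF assms(1)]] by blast
  finally show ?thesis .
qed

lemma cl_count_split:
  assumes "simple_graph V E"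
  shows "card (cl V E t) = card {S \<in> cl V E t. x \<in> S} + card (cl (V - {x}) (del E {x}) t)"
proof -
  have fin: "finite (cl V E t)" using finite_cl assms unfolding simple_graph_def by blast
  have "cl V E t = {S \<in> cl V E t. x \<in> S} \<union> {S \<in> cl V E t. S \<inter> {x} = {}}" by blast
  moreover have "{S \<in> cl V E t. x \<in> S} \<inter> {S \<in> cl V E t. S \<inter> {x} = {}} = {}" by blast
  ultimately have "card (cl V E t) = card {S \<in> cl V E t. x \<in> S} + card {S \<in> cl V E t. S \<inter> {x} = {}}"
    using fin by (metis (no_types, lifting) card_Un_disjoint finite_Un)
  then show ?thesis by (simp add: cl_del)
qed

lemma card_edges_at:
  assumes "simple_graph V E"
  shows "card {e\<in>E. x \<in> e} = card (nbrs E x)"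
proof -
  have "bij_betw (\<lambda>v. {x, v}) (nbrs E x) {e\<in>E. x \<in> e}"
  proof (rule bij_betw_imageI)
    show "inj_on (\<lambda>v. {x, v}) (nbrs E x)"
      by (rule inj_onI) (auto simp: doubleton_eq_iff)
    show "(\<lambda>v. {x, v}) ` nbrs E x = {e \<in> E. x \<in> e}"
    proof
      show "(\<lambda>v. {x, v}) ` nbrs E x \<subseteq> {e \<in> E. x \<in> e}"
        unfolding nbrs_def adj_def by auto
      show "{e \<in> E. x \<in> e} \<subseteq> (\<lambda>v. {x, v}) ` nbrs E x"
      proof
        fix e assume e: "e \<in> {e \<in> E. x \<in> e}"
        then obtain u v where uv: "e = {u,v}" "adj E u v" using sg_edge[OF assms(1)] by blast
        show "e \<in> (\<lambda>v. {x, v}) ` nbrs E x"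
        proof (cases "x = u")
          case True
          then show ?thesis using uv unfolding nbrs_def by auto
        next
          case False
          then have "x = v" using e uv by auto
          then show ?thesis using uv unfolding nbrs_def by (auto simp: adj_sym insert_commute)
        qed
      qed
    qed
  qed
  then show ?thesis by (simp add: bij_betw_same_card)
qed

lemma card_filter_sum: "finite B \<Longrightarrow> card {x\<in>B. P x} = (\<Sum>x\<in>B. if P x then 1 else 0)"
  by (simp add: sum.If_cases Int_def)

lemma dc_eq:
  assumes sg: "simple_graph V E" and CV: "C \<subseteq> V" and t2: "t \<ge> 2"
  shows "(t choose 2) * card {S\<in>cl V E t. S \<subseteq> C} = (\<Sum>e\<in>{e\<in>E. e \<subseteq> C}. card {S\<in>cl V E t. S \<subseteq> C \<and> e \<subseteq> S})"
proof -
  let ?A = "{S\<in>cl V E t. S \<subseteq> C}" and ?B = "{e\<in>E. e \<subseteq> C}"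
  have finV: "finite V" using sg unfolding simple_graph_def by blast
  have finA: "finite ?A" using finite_cl[OF finV] by simp
  have finE: "finite E" using sg finV unfolding simple_graph_def
    by (metis Pow_iff finite_Pow_iff finite_subset subsetI)
  then have finB: "finite ?B" by simp
  have each: "card {e\<in>?B. e \<subseteq> S} = t choose 2" if S: "S \<in> ?A" for S
  proof -
    have cp: "is_complete_on E S" and cS: "card S = t" and SC: "S \<subseteq> C" using S unfolding cl_def by auto
    have finS: "finite S" using cS t2 card.infinite by fastforce
    have "{e\<in>?B. e \<subseteq> S} = {e. e \<subseteq> S \<and> card e = 2}"
    proof
      show "{e\<in>?B. e \<subseteq> S} \<subseteq> {e. e \<subseteq> S \<and> card e = 2}"
      proof
        fix e assume "e \<in> {e\<in>?B. e \<subseteq> S}"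
        then have "e \<in> E" "e \<subseteq> S" by auto
        then show "e \<in> {e. e \<subseteq> S \<and> card e = 2}" using sg unfolding simple_graph_def by blast
      qed
      show "{e. e \<subseteq> S \<and> card e = 2} \<subseteq> {e\<in>?B. e \<subseteq> S}"
      proof
        fix e assume e: "e \<in> {e. e \<subseteq> S \<and> card e = 2}"
        then obtain a b where ab: "e = {a,b}" "a \<noteq> b" by (auto simp: card_2_iff)
        then have "a \<in> S" "b \<in> S" using e by auto
        then have "adj E a b" using completeD[OF cp] ab(2) by blast
        then have "e \<in> E" using ab(1) unfolding adj_def by simp
        then show "e \<in> {e\<in>?B. e \<subseteq> S}" using e SC by auto
      qed
    qed
    then show ?thesis using n_subsets[OF finS, of 2] cS by simp
  qed
  have "(t choose 2) * card ?A = (\<Sum>S\<in>?A. card {e\<in>?B. e \<subseteq> S})"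
    using each by simp
  also have "\<dots> = (\<Sum>S\<in>?A. \<Sum>e\<in>?B. if e \<subseteq> S then 1 else 0)"
    using card_filter_sum[OF finB] by simp
  also have "\<dots> = (\<Sum>e\<in>?B. \<Sum>S\<in>?A. if e \<subseteq> S then 1 else 0)"
    by (rule sum.swap)
  also have "\<dots> = (\<Sum>e\<in>?B. card {S\<in>?A. e \<subseteq> S})"
    using card_filter_sum[OF finA] by simp
  also have "\<dots> = (\<Sum>e\<in>?B. card {S\<in>cl V E t. S \<subseteq> C \<and> e \<subseteq> S})"
    by (intro sum.cong refl arg_cong[where f=card]) blast
  finally show ?thesis .
qed

lemma comp_count:
  assumes sg: "simple_graph V E" and CV: "C \<subseteq> V" and t3: "t \<ge> 3" and mt: "card C \<ge> t"
    and nb: "\<forall>u\<in>C. \<exists>w\<in>C. adj E u w"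
  shows "(t choose 2) * card {S\<in>cl V E t. S \<subseteq> C} \<le> card {e\<in>E. e \<subseteq> C} * ((card C - 2) choose (t - 2))"
    "(t choose 2) * card {S\<in>cl V E t. S \<subseteq> C} = card {e\<in>E. e \<subseteq> C} * ((card C - 2) choose (t - 2))
       \<longleftrightarrow> is_complete_on E C"
proof -
  let ?A = "{S\<in>cl V E t. S \<subseteq> C}" and ?B = "{e\<in>E. e \<subseteq> C}"
  let ?K = "(card C - 2) choose (t - 2)"
  let ?f = "\<lambda>e. card {S\<in>cl V E t. S \<subseteq> C \<and> e \<subseteq> S}"
  have finV: "finite V" using sg unfolding simple_graph_def by blast
  have finC: "finite C" using finV CV finite_subset by blast
  have finE: "finite E" using sg finV unfolding simple_graph_def
    by (metis Pow_iff finite_Pow_iff finite_subset subsetI)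
  then have finB: "finite ?B" by simp
  have dc: "(t choose 2) * card ?A = sum ?f ?B" using dc_eq[OF sg CV] t3 by simp
  have bnd: "?f e \<le> ?K" if e: "e \<in> ?B" for e
  proof -
    have ce: "card e = 2" using e sg unfolding simple_graph_def by blast
    have fe: "finite e" using ce card.infinite by fastforce
    have "?f e \<le> card {S. e \<subseteq> S \<and> S \<subseteq> C \<and> card S = t}"
      by (rule card_mono) (use finC in \<open>auto simp: cl_def\<close>)
    also have "\<dots> \<le> card (C - e) choose (t - card e)" using card_sup_le[OF finC fe] .
    also have "card (C - e) = card C - 2" using e ce card_Diff_subset[OF fe] by simp
    finally show ?thesis using ce by simp
  qed
  have sumle: "sum ?f ?B \<le> card ?B * ?K"
    using sum_bounded_above[of ?B ?f ?K] bnd by simp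
  then show "(t choose 2) * card ?A \<le> card ?B * ?K" using dc by simp
  show "(t choose 2) * card ?A = card ?B * ?K \<longleftrightarrow> is_complete_on E C"
  proof
    assume eq: "(t choose 2) * card ?A = card ?B * ?K"
    show "is_complete_on E C"
    proof (rule ccontr)
      assume "\<not> is_complete_on E C"
      then obtain u v where uv: "u \<in> C" "v \<in> C" "u \<noteq> v" "\<not> adj E u v"
        unfolding is_complete_on_def by blast
      obtain w where w: "w \<in> C" "adj E u w" using nb uv(1) by blast
      have vw: "v \<noteq> w" using w(2) uv(4) by blast
      define e0 where "e0 = {u, w}"
      have e0B: "e0 \<in> ?B" using w uv(1) unfolding e0_def adj_def by simp
      have ce0: "card e0 = 2" using sg_adj(3)[OF sg w(2)] unfolding e0_def by simp
      have "?f e0 \<le> card {S. e0 \<subseteq> S \<and> S \<subseteq> C - {v} \<and> card S = t}"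
      proof (rule card_mono)
        show "finite {S. e0 \<subseteq> S \<and> S \<subseteq> C - {v} \<and> card S = t}" using finC by auto
        show "{S \<in> cl V E t. S \<subseteq> C \<and> e0 \<subseteq> S} \<subseteq> {S. e0 \<subseteq> S \<and> S \<subseteq> C - {v} \<and> card S = t}"
        proof
          fix S assume S: "S \<in> {S \<in> cl V E t. S \<subseteq> C \<and> e0 \<subseteq> S}"
          then have cp: "is_complete_on E S" and "card S = t" "S \<subseteq> C" "u \<in> S"
            unfolding cl_def e0_def by auto
          have "v \<notin> S"
          proof
            assume "v \<in> S"
            then have "adj E u v" using completeD[OF cp \<open>u \<in> S\<close>] uv(3) by blast
            then show False using uv(4) by blast
          qed
          then show "S \<in> {S. e0 \<subseteq> S \<and> S \<subseteq> C - {v} \<and> card S = t}"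
            using S \<open>card S = t\<close> \<open>S \<subseteq> C\<close> by auto
        qed
      qed
      also have "\<dots> \<le> card (C - {v} - e0) choose (t - card e0)"
      proof -
        have "finite e0" unfolding e0_def by simp
        then show ?thesis using card_sup_le[of "C - {v}" e0 t] finC by simp
      qed
      also have "card (C - {v} - e0) = card C - 3"
      proof -
        have "e0 \<subseteq> C - {v}" using e0B vw uv(3) unfolding e0_def by auto
        then have "card (C - {v} - e0) = card (C - {v}) - 2"
          using card_Diff_subset[of e0 "C - {v}"] ce0 unfolding e0_def by simp
        also have "card (C - {v}) = card C - 1" using uv(2) finC by simp
        finally show ?thesis by simp
      qed
      finally have f1: "?f e0 \<le> (card C - 3) choose (t - 2)" using ce0 by simp
      have "(card C - 2) choose (t - 2) = ((card C - 3) choose (t - 3)) + ((card C - 3) choose (t - 2))"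
      proof -
        have "card C - 2 = Suc (card C - 3)" "t - 2 = Suc (t - 3)" using mt t3 by auto
        then show ?thesis by simp
      qed
      moreover have "0 < (card C - 3) choose (t - 3)" using mt t3 by simp
      ultimately have "?f e0 < ?K" using f1 by linarith
      then have "sum ?f ?B < sum (\<lambda>_. ?K) ?B"
        using sum_strict_mono_ex1[OF finB, of ?f "\<lambda>_. ?K"] bnd e0B by blast
      then have "(t choose 2) * card ?A < card ?B * ?K" using dc by simp
      then show False using eq by simp
    qed
  next
    assume cp: "is_complete_on E C"
    have A: "?A = {S. S \<subseteq> C \<and> card S = t}"
    proof
      show "?A \<subseteq> {S. S \<subseteq> C \<and> card S = t}" unfolding cl_def by auto
      show "{S. S \<subseteq> C \<and> card S = t} \<subseteq> ?A"
      proof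
        fix S assume S: "S \<in> {S. S \<subseteq> C \<and> card S = t}"
        then have "is_complete_on E S" using cp unfolding is_complete_on_def by blast
        then show "S \<in> ?A" using S CV unfolding cl_def by auto
      qed
    qed
    have B: "?B = {e. e \<subseteq> C \<and> card e = 2}"
    proof
      show "?B \<subseteq> {e. e \<subseteq> C \<and> card e = 2}"
      proof
        fix e assume "e \<in> ?B"
        then show "e \<in> {e. e \<subseteq> C \<and> card e = 2}" using sg unfolding simple_graph_def by blast
      qed
      show "{e. e \<subseteq> C \<and> card e = 2} \<subseteq> ?B"
      proof
        fix e assume e: "e \<in> {e. e \<subseteq> C \<and> card e = 2}"
        then obtain a b where ab: "e = {a,b}" "a \<noteq> b" by (auto simp: card_2_iff)
        then have "a \<in> C" "b \<in> C" using e by auto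
        then have "adj E a b" using completeD[OF cp] ab(2) by blast
        then show "e \<in> ?B" using ab(1) e unfolding adj_def by simp
      qed
    qed
    have cA: "card ?A = card C choose t" unfolding A using n_subsets[OF finC] .
    have cB: "card ?B = card C choose 2" unfolding B using n_subsets[OF finC] .
    have k: "card C - 1 \<ge> 1" "Suc (card C - 1) = card C" "card C - 1 - 1 = card C - 2" using mt t3 by auto
    show "(t choose 2) * card ?A = card ?B * ?K"
      unfolding cA cB using F_nat_id[of t "card C - 1"] k t3 by (simp add: mult.commute)
  qed
qed

definition Fr :: "nat \<Rightarrow> nat \<Rightarrow> real" where
  "Fr t k = real (Suc k choose t) / real (Suc k choose 2)"

lemma Fr_alt:
  assumes "t \<ge> 2" "k \<ge> 1"
  shows "Fr t k = real ((k - 1) choose (t - 2)) / real (t choose 2)"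
proof -
  have p1: "real (Suc k choose 2) > 0" using assms by simp
  have p2: "real (t choose 2) > 0" using assms by simp
  have "real (Suc k choose t) * real (t choose 2) = real (Suc k choose 2) * real ((k - 1) choose (t - 2))"
    using F_nat_id[OF assms] by (metis of_nat_mult)
  then show ?thesis unfolding Fr_def using p1 p2 by (simp add: field_simps)
qed

lemma Fr_mono:
  assumes "t \<ge> 2" "1 \<le> k" "k \<le> k'"
  shows "Fr t k \<le> Fr t k'"
proof -
  have "(k - 1) choose (t - 2) \<le> (k' - 1) choose (t - 2)"
    using binomial_right_mono assms(3) by simp
  then show ?thesis using Fr_alt[OF assms(1,2)] Fr_alt[OF assms(1)] assms
    by (simp add: divide_right_mono)
qed

lemma Fr_zero: "Suc k < t \<Longrightarrow> Fr t k = 0"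
  unfolding Fr_def by simp

definition Ssum :: "'a set \<Rightarrow> 'a set set \<Rightarrow> nat \<Rightarrow> real" where
  "Ssum V E t = (\<Sum>e\<in>E. Fr t (longest_path_through V E e))"

definition Prop :: "'a set \<Rightarrow> 'a set set \<Rightarrow> nat \<Rightarrow> bool" where
  "Prop V E t \<longleftrightarrow> (\<forall>C\<in>components V E. is_complete_on E C \<or> \<not> has_path_of_length_in V E C (t - 1))"

lemma finite_E: "simple_graph V E \<Longrightarrow> finite E"
  unfolding simple_graph_def by (metis Pow_iff finite_Pow_iff finite_subset subsetI)

lemma exists_longest:
  assumes "simple_graph V E" "is_path V E ys"
  obtains P where "is_path V E P" "\<And>xs. is_path V E xs \<Longrightarrow> length xs \<le> length P"
proof -
  have "finite V" using assms(1) unfolding simple_graph_def by blast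
  then have "\<forall>y. is_path V E y \<longrightarrow> length y < Suc (card V)"
    using path_length_le le_imp_less_Suc by blast
  then obtain P where "is_path V E P" "\<forall>y. is_path V E y \<longrightarrow> length y \<le> length P"
    using ex_has_greatest_nat[of "is_path V E" ys length "Suc (card V)"] assms(2) by blast
  then show ?thesis using that by blast
qed

lemma end_nbr_in:
  assumes "is_path V E P" "\<And>xs. is_path V E xs \<Longrightarrow> length xs \<le> length P"
    "simple_graph V E" "adj E (hd P) z"
  shows "z \<in> set P"
proof (rule ccontr)
  assume "z \<notin> set P"
  moreover have "z \<in> V" using sg_adj(2)[OF assms(3,4)] .
  ultimately have "is_path V E (z # P)" using path_Cons[OF assms(1)] assms(4) adj_sym by metis
  then show False using assms(2)[of "z # P"] by simp
qed

lemma clique_path: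
  assumes "S \<in> cl V E t" "t \<ge> 1"
  obtains xs where "is_path V E xs" "length xs = t" "set xs = S"
proof -
  have cS: "card S = t" and SV: "S \<subseteq> V" and cp: "is_complete_on E S" using assms unfolding cl_def by auto
  have finS: "finite S" using cS assms(2) card.infinite by fastforce
  obtain xs where xs: "set xs = S" "distinct xs" using finite_distinct_list[OF finS] by blast
  have "sorted_wrt (adj E) xs"
    unfolding sorted_wrt_iff_nth_less
  proof (intro allI impI)
    fix i j assume "i < j" "j < length xs"
    then have "xs ! i \<noteq> xs ! j" "xs ! i \<in> S" "xs ! j \<in> S" using xs
      by (auto simp: nth_eq_iff_index_eq)
    then show "adj E (xs ! i) (xs ! j)" using completeD[OF cp] by blast
  qed
  then have "successively (adj E) xs" by (rule successively_if_sorted_wrt)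
  moreover have "length xs = t" using xs cS distinct_card by metis
  ultimately have "is_path V E xs" "length xs = t" using xs SV assms(2) unfolding is_path_alt by auto
  then show ?thesis using that xs by blast
qed

lemma caseA:
  assumes sg: "simple_graph V E" and t3: "t \<ge> 3"
    and np: "\<And>xs. is_path V E xs \<Longrightarrow> length xs < t"
  shows "card (cl V E t) = 0" "Ssum V E t = 0" "Prop V E t"
proof -
  have "cl V E t = {}"
  proof (rule ccontr)
    assume "cl V E t \<noteq> {}"
    then obtain S where "S \<in> cl V E t" by blast
    then obtain xs where "is_path V E xs" "length xs = t" using clique_path t3 by (metis one_le_numeral order_trans)
    then show False using np by fastforce
  qed
  then show "card (cl V E t) = 0" by simp
  have "Fr t (longest_path_through V E e) = 0" if e: "e \<in> E" for e
  proof -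
    obtain u v where uv: "e = {u,v}" "is_path V E [u,v]" "path_contains_edge [u,v] e"
      using edge_path[OF sg e] .
    have "longest_path_through V E e \<le> t - 2"
      using lpt_le[OF sg uv(2,3), of "t - 2"] np by fastforce
    then show ?thesis using Fr_zero t3 by simp
  qed
  then show "Ssum V E t = 0" unfolding Ssum_def by simp
  show "Prop V E t" unfolding Prop_def has_path_of_length_in_def using np t3 by fastforce
qed

lemma path_adj01:
  assumes "is_path V E P" "length P \<ge> 2"
  shows "adj E (hd P) (P ! 1)"
proof -
  have "P \<noteq> []" using assms(2) by auto
  then have "hd P = P ! 0" by (simp add: hd_conv_nth)
  then show ?thesis using assms unfolding is_path_def by (metis One_nat_def Suc_1 Suc_le_lessD)
qed

lemma lpt_at_end:
  assumes sg: "simple_graph V E" and P: "is_path V E P"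
    and maxP: "\<And>xs. is_path V E xs \<Longrightarrow> length xs \<le> length P"
    and e: "e \<in> E" "hd P \<in> e"
  shows "length P - 1 \<le> longest_path_through V E e"
proof -
  obtain u v where uv: "e = {u,v}" "u \<noteq> v" "u \<in> V" "v \<in> V" "adj E u v" using sg_edge[OF sg e(1)] .
  obtain z where z: "e = {hd P, z}" "adj E (hd P) z"
  proof (cases "hd P = u")
    case True then show ?thesis using that uv by blast
  next
    case False then have "hd P = v" using e(2) uv(1) by blast
    then show ?thesis using that uv by (metis adj_sym insert_commute)
  qed
  have "z \<in> set P" using end_nbr_in[OF P maxP sg z(2)] .
  then obtain i where i: "i < length P" "P ! i = z" by (meson in_set_conv_nth)
  have Pne: "P \<noteq> []" using P unfolding is_path_def by blast
  have "i \<noteq> 0"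
  proof
    assume "i = 0"
    then have "z = hd P" using i Pne by (simp add: hd_conv_nth)
    then show False using sg_adj(3)[OF sg z(2)] by simp
  qed
  then have "0 < i" by simp
  have adjz: "adj E (hd P) (P ! i)" using z(2) i(2) by simp
  note R = path_rotate[OF P \<open>0 < i\<close> i(1) adjz]
  have "length (rev (take i P) @ drop i P) - 1 \<le> longest_path_through V E e"
    using lpt_ge[OF sg R(1)] R(2) z(1) i(2) by simp
  then show ?thesis using R(3) by simp
qed

lemma vertex_case:
  assumes sg: "simple_graph V E" and t3: "t \<ge> 3"
    and P: "is_path V E P" and maxP: "\<And>xs. is_path V E xs \<Longrightarrow> length xs \<le> length P"
    and lenP: "length P \<ge> t"
    and deg: "2 * card (nbrs E (hd P)) \<le> length P - 1"
    and IH: "real (card (cl (V - {hd P}) (del E {hd P}) t)) \<le> Ssum (V - {hd P}) (del E {hd P}) t"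
  shows "real (card (cl V E t)) < Ssum V E t" "\<not> Prop V E t"
proof -
  define x where "x = hd P"
  define L where "L = length P - 1"
  define d where "d = card (nbrs E x)"
  have L1: "L \<ge> t - 1" "L \<ge> 1" using lenP t3 unfolding L_def by auto
  have Pne: "P \<noteq> []" using P unfolding is_path_def by blast
  have xV: "x \<in> V" using P Pne unfolding x_def is_path_def by auto
  have finV: "finite V" using sg unfolding simple_graph_def by blast
  have finE: "finite E" using finite_E[OF sg] .
  have a01: "adj E x (P ! 1)" using path_adj01[OF P] lenP t3 unfolding x_def by simp
  have d1: "d \<ge> 1"
  proof -
    have "P ! 1 \<in> nbrs E x" using a01 unfolding nbrs_def by simp
    then have "nbrs E x \<noteq> {}" by blast
    then show ?thesis using finite_nbrs[OF sg] unfolding d_def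
      by (simp add: Suc_leI card_gt_0_iff)
  qed
  have deg': "2 * d \<le> L" using deg unfolding d_def L_def x_def .
  have key: "real (d choose (t - 1)) < real d * Fr t L"
  proof -
    have ki: "(d choose (t - 1)) * (t choose 2) < d * ((L - 1) choose (t - 2))"
      using key_ineq[OF t3 d1 deg' L1(1)] .
    have pos: "real (t choose 2) > 0" using t3 by simp
    have "real (d choose (t - 1)) * real (t choose 2) < real d * real ((L - 1) choose (t - 2))"
      using ki by (metis of_nat_less_iff of_nat_mult)
    then have "real (d choose (t - 1)) < real d * real ((L - 1) choose (t - 2)) / real (t choose 2)"
      using pos by (simp add: field_simps)
    then show ?thesis using Fr_alt[of t L] t3 L1(2) by simp
  qed
  have G'sg: "simple_graph (V - {x}) (del E {x})" using sg_del[OF sg] .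
  have Ncount: "card (cl V E t) \<le> (d choose (t - 1)) + card (cl (V - {x}) (del E {x}) t)"
    using cl_count_split[OF sg, of t x] card_cl_at[OF sg, of t x] t3 unfolding d_def by simp
  have Esplit: "E = {e\<in>E. x \<in> e} \<union> del E {x}" "{e\<in>E. x \<in> e} \<inter> del E {x} = {}"
    unfolding del_def by auto
  have s1: "real d * Fr t L \<le> (\<Sum>e\<in>{e\<in>E. x \<in> e}. Fr t (longest_path_through V E e))"
  proof -
    have "(\<Sum>e\<in>{e\<in>E. x \<in> e}. Fr t L) \<le> (\<Sum>e\<in>{e\<in>E. x \<in> e}. Fr t (longest_path_through V E e))"
    proof (rule sum_mono)
      fix e assume "e \<in> {e\<in>E. x \<in> e}"
      then have "L \<le> longest_path_through V E e"
        using lpt_at_end[OF sg P maxP] unfolding L_def x_def by blast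
      then show "Fr t L \<le> Fr t (longest_path_through V E e)" using Fr_mono t3 L1(2) by simp
    qed
    moreover have cd: "card {e\<in>E. x \<in> e} = d"
      using card_edges_at[OF sg, of x] unfolding d_def by simp
    moreover have "(\<Sum>e\<in>{e\<in>E. x \<in> e}. Fr t L) = real (card {e\<in>E. x \<in> e}) * Fr t L"
      by simp
    ultimately show ?thesis by simp
  qed
  have s2: "Ssum (V - {x}) (del E {x}) t \<le> (\<Sum>e\<in>del E {x}. Fr t (longest_path_through V E e))"
    unfolding Ssum_def
  proof (rule sum_mono)
    fix e assume e: "e \<in> del E {x}"
    have "1 \<le> longest_path_through (V - {x}) (del E {x}) e" using lpt_pos[OF G'sg e] .
    moreover have "longest_path_through (V - {x}) (del E {x}) e \<le> longest_path_through V E e"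
      using lpt_del_le[OF sg e] .
    ultimately show "Fr t (longest_path_through (V - {x}) (del E {x}) e) \<le> Fr t (longest_path_through V E e)"
      using Fr_mono t3 by simp
  qed
  have Ssplit: "Ssum V E t = (\<Sum>e\<in>{e\<in>E. x \<in> e}. Fr t (longest_path_through V E e))
      + (\<Sum>e\<in>del E {x}. Fr t (longest_path_through V E e))"
    unfolding Ssum_def using finE Esplit
    by (metis (no_types, lifting) finite_Un sum.union_disjoint)
  have "real (card (cl V E t)) \<le> real (d choose (t - 1)) + real (card (cl (V - {x}) (del E {x}) t))"
    using Ncount by (metis of_nat_add of_nat_le_iff)
  also have "\<dots> < real d * Fr t L + Ssum (V - {x}) (del E {x}) t"
    using key IH unfolding x_def by linarith
  also have "\<dots> \<le> Ssum V E t" using s1 s2 Ssplit by linarith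
  finally show "real (card (cl V E t)) < Ssum V E t" .
  define C0 where "C0 = {u \<in> V. (adj E)\<^sup>*\<^sup>* x u}"
  have C0c: "C0 \<in> components V E" unfolding C0_def components_def using xV by blast
  have PC0: "set P \<subseteq> C0"
  proof
    fix y assume "y \<in> set P"
    then have "(adj E)\<^sup>*\<^sup>* x y" using path_reach[of E P y] P Pne unfolding is_path_alt x_def by blast
    then show "y \<in> C0" using \<open>y \<in> set P\<close> P unfolding C0_def is_path_def by auto
  qed
  have xC0: "x \<in> C0" using PC0 Pne unfolding x_def by auto
  have nbsub: "nbrs E x \<subseteq> set P - {x}"
  proof
    fix z assume "z \<in> nbrs E x"
    then have "adj E x z" unfolding nbrs_def by simp
    then show "z \<in> set P - {x}" using end_nbr_in[OF P maxP sg] sg_adj(3)[OF sg] unfolding x_def by blast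
  qed
  have cardP: "card (set P - {x}) = L"
    using P Pne unfolding is_path_def L_def x_def by (simp add: distinct_card)
  have "\<not> set P - {x} \<subseteq> nbrs E x"
  proof
    assume "set P - {x} \<subseteq> nbrs E x"
    then have "L \<le> d" using card_mono[OF finite_nbrs[OF sg]] cardP unfolding d_def by metis
    then show False using deg' d1 by linarith
  qed
  then obtain y where y: "y \<in> set P" "y \<noteq> x" "\<not> adj E x y" unfolding nbrs_def by blast
  have ncomp: "\<not> is_complete_on E C0"
  proof
    assume "is_complete_on E C0"
    moreover have "y \<in> C0" using y(1) PC0 by blast
    ultimately have "adj E x y" using completeD[OF _ xC0] y(2) by metis
    then show False using y(3) by simp
  qed
  have "is_path V E (take t P)" using path_take[OF P] t3 by simp
  moreover have "set (take t P) \<subseteq> C0" using PC0 set_take_subset by fastforce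
  moreover have "length (take t P) = t - 1 + 1" using lenP t3 by simp
  ultimately have "has_path_of_length_in V E C0 (t - 1)" unfolding has_path_of_length_in_def by blast
  then show "\<not> Prop V E t" using C0c ncomp unfolding Prop_def by blast
qed

lemma cycle_from_path:
  assumes P: "is_path V E P" and i: "Suc i < length P"
    and a1: "adj E (hd P) (P ! Suc i)" and a2: "adj E (last P) (P ! i)"
  shows "cyc E (take (Suc i) P @ rev (drop (Suc i) P))" "distinct (take (Suc i) P @ rev (drop (Suc i) P))"
    "set (take (Suc i) P @ rev (drop (Suc i) P)) = set P"
proof -
  have d: "distinct P" "successively (adj E) P" "P \<noteq> []" using P unfolding is_path_alt by auto
  have s1: "successively (adj E) (take (Suc i) P)" "successively (adj E) (drop (Suc i) P)"
    using d(2) by (metis append_take_drop_id successively_append_iff)+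
  have ne: "take (Suc i) P \<noteq> []" "drop (Suc i) P \<noteq> []" using i by auto
  have l1: "last (take (Suc i) P) = P ! i" using i by (simp add: take_Suc_conv_app_nth)
  have h2: "hd (rev (drop (Suc i) P)) = last P" using ne(2) by (simp add: hd_rev)
  have l2: "last (rev (drop (Suc i) P)) = P ! Suc i" using i by (simp add: last_rev hd_drop_conv_nth)
  have h1: "hd (take (Suc i) P @ rev (drop (Suc i) P)) = hd P" using ne(1) by (simp add: hd_take)
  have r1: "successively (adj E) (rev (drop (Suc i) P))"
    using s1(2) by (simp add: adj_sym cong: successively_cong)
  have r2: "successively (adj E) (rev (drop (Suc i) P) @ [hd P])"
    unfolding successively_append_iff using r1 l2 a1 by (simp add: adj_sym)
  have "successively (adj E) (take (Suc i) P @ (rev (drop (Suc i) P) @ [hd P]))"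
    unfolding successively_append_iff[of _ "take (Suc i) P"] using s1(1) r2 l1 ne h2 a2
    by (simp add: adj_sym)
  then show "cyc E (take (Suc i) P @ rev (drop (Suc i) P))"
    unfolding cyc_def using h1 ne by simp
  show "distinct (take (Suc i) P @ rev (drop (Suc i) P))"
    using d(1) by (metis append_take_drop_id distinct_append distinct_rev set_rev)
  show "set (take (Suc i) P @ rev (drop (Suc i) P)) = set P"
    by (metis append_take_drop_id set_append set_rev)
qed

lemma cyc_ham:
  assumes cs: "cyc E cs" "distinct cs" "set cs \<subseteq> V" and w: "w \<in> set cs"
  obtains Q where "is_path V E Q" "hd Q = w" "set Q = set cs" "length Q = length cs"
proof -
  obtain as bs where "cs = as @ w # bs" using split_list[OF w] by blast
  then have "cyc E (w # bs @ as)" "distinct (w # bs @ as)" "set (w # bs @ as) = set cs"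
      "length (w # bs @ as) = length cs"
    using cyc_rot[of E as w bs] cs by auto
  then show ?thesis using that cyc_path[of E "w # bs @ as" V] cs(3) by auto
qed

lemma cyc_edge_path:
  assumes cs: "cyc E cs" "distinct cs" "set cs \<subseteq> V" and u: "u \<in> set cs" and v: "v \<in> set cs"
    and a: "adj E u v" and uv: "u \<noteq> v"
  obtains R where "is_path V E R" "path_contains_edge R {u,v}" "length R = length cs"
proof -
  obtain as bs where cs1: "cs = as @ u # bs" using split_list[OF u] by blast
  have c2: "cyc E (u # bs @ as)" "distinct (u # bs @ as)" "set (u # bs @ as) = set cs"
      "length (u # bs @ as) = length cs"
    using cyc_rot[of E as u bs] cs cs1 by auto
  have "v \<in> set (bs @ as)" using v c2(3) uv by (metis insert_iff list.simps(15) set_append)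
  then obtain as' bs' where sp: "bs @ as = as' @ v # bs'" using split_list by metis
  have "successively (adj E) (as' @ v # u # rev bs')"
    using cyc_chord[of E u as' v bs'] c2(1) sp a by simp
  moreover have "distinct (as' @ v # u # rev bs')" using c2(2) sp by auto
  moreover have "set (as' @ v # u # rev bs') = set cs" using c2(3) sp by auto
  moreover have "length (as' @ v # u # rev bs') = length cs" using c2(4) sp by simp
  moreover have "path_contains_edge (as' @ v # u # rev bs') {u,v}"
    unfolding pce_alt by (intro exI[of _ as'] exI[of _ v] exI[of _ u] exI[of _ "rev bs'"]) (simp add: insert_commute)
  ultimately show ?thesis using that[of "as' @ v # u # rev bs'"] cs(3) unfolding is_path_alt by auto
qed

lemma comp_case:
  assumes sg: "simple_graph V E" and t3: "t \<ge> 3"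
    and P: "is_path V E P" and maxP: "\<And>xs. is_path V E xs \<Longrightarrow> length xs \<le> length P"
    and lenP: "length P \<ge> t"
    and cs: "cyc E cs" "distinct cs" "set cs = set P"
    and IH: "real (card (cl (V - set P) (del E (set P)) t)) \<le> Ssum (V - set P) (del E (set P)) t \<and>
      (real (card (cl (V - set P) (del E (set P)) t)) = Ssum (V - set P) (del E (set P)) t
        \<longleftrightarrow> Prop (V - set P) (del E (set P)) t)"
  shows "real (card (cl V E t)) \<le> Ssum V E t \<and> (real (card (cl V E t)) = Ssum V E t \<longleftrightarrow> Prop V E t)"
proof -
  define C where "C = set P"
  define L where "L = length P - 1"
  define V' where "V' = V - C"
  define E' where "E' = del E C"
  have Pne: "P \<noteq> []" and dP: "distinct P" and CV: "C \<subseteq> V"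
    using P unfolding is_path_def C_def by auto
  have cardC: "card C = length P" using dP unfolding C_def by (simp add: distinct_card)
  have finV: "finite V" using sg unfolding simple_graph_def by blast
  have finE: "finite E" using finite_E[OF sg] .
  have csV: "set cs \<subseteq> V" using cs(3) CV unfolding C_def by simp
  have lcs: "length cs = length P" using cs(2,3) dP by (metis distinct_card)
  have ham: "\<exists>Q. is_path V E Q \<and> hd Q = w \<and> set Q = C \<and> length Q = length P" if "w \<in> C" for w
  proof -
    have "w \<in> set cs" using that cs(3) unfolding C_def by simp
    then obtain Q where Q: "is_path V E Q" "hd Q = w" "set Q = set cs" "length Q = length cs"
      using cyc_ham[OF cs(1,2) csV] by metis
    show ?thesis using Q cs(3) lcs unfolding C_def by (intro exI[of _ Q]) simp
  qed
  have closed1: "v \<in> C" if uC: "u \<in> C" and auv: "adj E u v" for u v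
  proof (rule ccontr)
    assume vC: "v \<notin> C"
    obtain Q where Q: "is_path V E Q" "hd Q = u" "set Q = C" "length Q = length P" using ham[OF uC] by blast
    have "is_path V E (v # Q)"
      using path_Cons[OF Q(1) sg_adj(2)[OF sg auv]] vC Q(2,3) auv by (simp add: adj_sym)
    then show False using maxP[of "v # Q"] Q(4) by simp
  qed
  have closed: "closedset E C"
    unfolding closedset_def
  proof (intro allI impI)
    fix u v assume a: "adj E u v"
    have a': "adj E v u" using a by (simp add: adj_sym)
    show "u \<in> C \<longleftrightarrow> v \<in> C"
    proof
      assume "u \<in> C" then show "v \<in> C" using closed1[OF _ a] by simp
    next
      assume "v \<in> C" then show "u \<in> C" using closed1[OF _ a'] by simp
    qed
  qed
  have nb: "\<forall>u\<in>C. \<exists>w\<in>C. adj E u w"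
  proof
    fix u assume u: "u \<in> C"
    obtain Q where Q: "is_path V E Q" "hd Q = u" "set Q = C" "length Q = length P" using ham[OF u] by blast
    have "adj E u (Q ! 1)" using path_adj01[OF Q(1)] Q(2,4) lenP t3 by simp
    moreover have "Q ! 1 \<in> C"
    proof -
      have "1 < length Q" using Q(4) lenP t3 by simp
      then show ?thesis using Q(3) nth_mem by blast
    qed
    ultimately show "\<exists>w\<in>C. adj E u w" by blast
  qed
  have lptC: "longest_path_through V E e = L" if e: "e \<in> E" "e \<subseteq> C" for e
  proof -
    obtain u v where uv: "e = {u,v}" "u \<noteq> v" "u \<in> V" "v \<in> V" "adj E u v" using sg_edge[OF sg e(1)] .
    have uvC: "u \<in> set cs" "v \<in> set cs" using e(2) uv(1) cs(3) unfolding C_def by auto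
    obtain R where R: "is_path V E R" "path_contains_edge R {u,v}" "length R = length cs"
      using cyc_edge_path[OF cs(1,2) csV uvC uv(5) uv(2)] by blast
    have "L \<le> longest_path_through V E e" using lpt_ge[OF sg R(1)] R(2,3) lcs uv(1) unfolding L_def by simp
    moreover have "longest_path_through V E e \<le> L"
      using lpt_le[OF sg R(1)] R(2) uv(1) maxP unfolding L_def by (simp add: diff_le_mono)
    ultimately show ?thesis by simp
  qed
  have reach: "\<forall>u\<in>C. (adj E)\<^sup>*\<^sup>* (hd P) u"
    using path_reach[of E P] P Pne unfolding is_path_alt C_def by blast
  have hdC: "hd P \<in> C" using Pne unfolding C_def by simp
  have comps: "components V E = insert C (components V' E')"
    using components_split[OF closed CV hdC reach] unfolding V'_def E'_def .
  have finCl: "finite (cl V E t)" using finite_cl[OF finV] .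
  have clsplit: "cl V E t = {S\<in>cl V E t. S \<subseteq> C} \<union> {S\<in>cl V E t. S \<inter> C = {}}"
    using cliques_split[OF closed _, of _ V t] t3 by auto
  have cldisj: "{S\<in>cl V E t. S \<subseteq> C} \<inter> {S\<in>cl V E t. S \<inter> C = {}} = {}"
  proof (rule ccontr)
    assume "{S\<in>cl V E t. S \<subseteq> C} \<inter> {S\<in>cl V E t. S \<inter> C = {}} \<noteq> {}"
    then obtain S where "S \<in> cl V E t" "S \<subseteq> C" "S \<inter> C = {}" by blast
    then have "S = {}" "card S = t" unfolding cl_def by auto
    then show False using t3 by simp
  qed
  have Nsplit: "card (cl V E t) = card {S\<in>cl V E t. S \<subseteq> C} + card (cl V' E' t)"
  proof -
    have "card (cl V E t) = card {S\<in>cl V E t. S \<subseteq> C} + card {S\<in>cl V E t. S \<inter> C = {}}"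
      using card_Un_disjoint[of "{S\<in>cl V E t. S \<subseteq> C}" "{S\<in>cl V E t. S \<inter> C = {}}"] finCl clsplit cldisj
      by simp
    then show ?thesis unfolding V'_def E'_def by (simp add: cl_del)
  qed
  have ES: "E = {e\<in>E. e \<subseteq> C} \<union> del E C" "{e\<in>E. e \<subseteq> C} \<inter> del E C = {}"
    using edges_split[OF sg closed] by auto
  have Ssplit: "Ssum V E t = real (card {e\<in>E. e \<subseteq> C}) * Fr t L + Ssum V' E' t"
  proof -
    have "Ssum V E t = (\<Sum>e\<in>{e\<in>E. e \<subseteq> C}. Fr t (longest_path_through V E e))
        + (\<Sum>e\<in>del E C. Fr t (longest_path_through V E e))"
      unfolding Ssum_def using finE ES
      by (metis (no_types, lifting) finite_Un sum.union_disjoint)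
    also have "(\<Sum>e\<in>{e\<in>E. e \<subseteq> C}. Fr t (longest_path_through V E e)) = (\<Sum>e\<in>{e\<in>E. e \<subseteq> C}. Fr t L)"
      using lptC by (intro sum.cong) auto
    also have "(\<Sum>e\<in>del E C. Fr t (longest_path_through V E e)) = Ssum V' E' t"
      unfolding Ssum_def V'_def E'_def using lpt_closed_eq[OF sg closed] by (intro sum.cong) auto
    finally show ?thesis by simp
  qed
  have mt: "card C \<ge> t" using cardC lenP by simp
  note cc = comp_count[OF sg CV t3 mt nb]
  have L1: "L \<ge> 1" "card C - 2 = L - 1" using lenP t3 cardC unfolding L_def by auto
  have FrL: "Fr t L = real ((card C - 2) choose (t - 2)) / real (t choose 2)"
    using Fr_alt[of t L] t3 L1 by simp
  have pos: "real (t choose 2) > 0" using t3 by simp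
  let ?NC = "card {S\<in>cl V E t. S \<subseteq> C}" and ?eC = "card {e\<in>E. e \<subseteq> C}"
  let ?K = "(card C - 2) choose (t - 2)"
  have eqF: "real ?eC * Fr t L = real ?eC * real ?K / real (t choose 2)" unfolding FrL by simp
  have rNC: "real ?NC = real ?eC * Fr t L \<longleftrightarrow> real (t choose 2) * real ?NC = real ?eC * real ?K"
    unfolding eqF using pos by (simp add: eq_divide_eq mult.commute)
  have rNC2: "real ?NC \<le> real ?eC * Fr t L \<longleftrightarrow> real (t choose 2) * real ?NC \<le> real ?eC * real ?K"
    unfolding eqF using pos by (simp add: le_divide_eq mult.commute)
  have n1: "real ((t choose 2) * ?NC) \<le> real (?eC * ?K)" using cc(1) by (simp only: of_nat_le_iff)
  have c1: "real ?NC \<le> real ?eC * Fr t L"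
    unfolding rNC2 using n1 by (simp only: of_nat_mult)
  have n2: "real ((t choose 2) * ?NC) = real (?eC * ?K) \<longleftrightarrow> is_complete_on E C"
    using cc(2) by (simp only: of_nat_eq_iff)
  have c2: "real ?NC = real ?eC * Fr t L \<longleftrightarrow> is_complete_on E C"
    unfolding rNC using n2 by (simp only: of_nat_mult)
  have hpC: "has_path_of_length_in V E C (t - 1)"
  proof -
    have "is_path V E (take t P)" using path_take[OF P] t3 by simp
    moreover have "set (take t P) \<subseteq> C" unfolding C_def using set_take_subset by fastforce
    moreover have "length (take t P) = t - 1 + 1" using lenP t3 by simp
    ultimately show ?thesis unfolding has_path_of_length_in_def by blast
  qed
  have compeq: "(is_complete_on E C' \<or> \<not> has_path_of_length_in V E C' (t - 1)) \<longleftrightarrow>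
      (is_complete_on E' C' \<or> \<not> has_path_of_length_in V' E' C' (t - 1))"
    if C': "C' \<in> components V' E'" for C'
  proof -
    have sub: "C' \<subseteq> V'" using C' unfolding components_def by blast
    have "is_complete_on E C' \<longleftrightarrow> is_complete_on E' C'"
      using sub unfolding is_complete_on_def E'_def V'_def by (auto simp: adj_del)
    moreover have "has_path_of_length_in V E C' (t - 1) \<longleftrightarrow> has_path_of_length_in V' E' C' (t - 1)"
      using sub unfolding has_path_of_length_in_def E'_def V'_def by (auto simp: path_del)
    ultimately show ?thesis by simp
  qed
  have PropEq: "Prop V E t \<longleftrightarrow> is_complete_on E C \<and> Prop V' E' t"
    unfolding Prop_def comps using hpC compeq by auto
  have IH': "real (card (cl V' E' t)) \<le> Ssum V' E' t"
    "real (card (cl V' E' t)) = Ssum V' E' t \<longleftrightarrow> Prop V' E' t"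
    using IH unfolding V'_def E'_def C_def by auto
  have NS: "real (card (cl V E t)) = real ?NC + real (card (cl V' E' t))" using Nsplit by simp
  show ?thesis
  proof
    show "real (card (cl V E t)) \<le> Ssum V E t" using NS Ssplit c1 IH'(1) by linarith
    have "real (card (cl V E t)) = Ssum V E t \<longleftrightarrow>
        real ?NC = real ?eC * Fr t L \<and> real (card (cl V' E' t)) = Ssum V' E' t"
      using NS Ssplit c1 IH'(1) by linarith
    then show "real (card (cl V E t)) = Ssum V E t \<longleftrightarrow> Prop V E t"
      using c2 IH'(2) PropEq by simp
  qed
qed

lemma main:
  assumes t3: "t \<ge> 3"
  shows "simple_graph V E \<Longrightarrow> real (card (cl V E t)) \<le> Ssum V E t \<and>
    (real (card (cl V E t)) = Ssum V E t \<longleftrightarrow> Prop V E t)"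
proof (induction "card V" arbitrary: V E rule: less_induct)
  case less
  note sg = less.prems
  have finV: "finite V" using sg unfolding simple_graph_def by blast
  have IHd: "real (card (cl (V - X) (del E X) t)) \<le> Ssum (V - X) (del E X) t \<and>
      (real (card (cl (V - X) (del E X) t)) = Ssum (V - X) (del E X) t \<longleftrightarrow> Prop (V - X) (del E X) t)"
    if X: "X \<subseteq> V" "X \<noteq> {}" for X
  proof -
    have "card (V - X) < card V"
      using X finV by (metis Diff_disjoint Diff_subset Int_absorb2 card_seteq not_le psubset_card_mono psubsetI)
    then show ?thesis using less.hyps sg_del[OF sg] by blast
  qed
  show ?case
  proof (cases "\<exists>xs. is_path V E xs \<and> length xs \<ge> t")
    case False
    then have np: "\<And>xs. is_path V E xs \<Longrightarrow> length xs < t" by fastforce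
    note A = caseA[OF sg t3 np]
    show ?thesis using A by simp
  next
    case True
    then obtain ys where ys: "is_path V E ys" "length ys \<ge> t" by blast
    obtain P where P: "is_path V E P" and maxP: "\<And>xs. is_path V E xs \<Longrightarrow> length xs \<le> length P"
      using exists_longest[OF sg ys(1)] by blast
    have lenP: "length P \<ge> t" using maxP[OF ys(1)] ys(2) by simp
    have Pne: "P \<noteq> []" and dP: "distinct P" and PV: "set P \<subseteq> V" using P unfolding is_path_def by auto
    define L where "L = length P - 1"
    have vcase: "real (card (cl V E t)) \<le> Ssum V E t \<and>
      (real (card (cl V E t)) = Ssum V E t \<longleftrightarrow> Prop V E t)"
      if Q: "is_path V E Q" "length Q = length P" "2 * card (nbrs E (hd Q)) \<le> L" for Q
    proof -
      have Qne: "Q \<noteq> []" using Q(1) unfolding is_path_def by blast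
      have "hd Q \<in> V" using Q(1) Qne unfolding is_path_def by auto
      then have "{hd Q} \<subseteq> V" "{hd Q} \<noteq> {}" by auto
      note ih = IHd[OF this]
      have maxQ: "\<And>xs. is_path V E xs \<Longrightarrow> length xs \<le> length Q" using maxP Q(2) by simp
      have "length Q \<ge> t" "2 * card (nbrs E (hd Q)) \<le> length Q - 1" using lenP Q(2,3) unfolding L_def by auto
      note vc = vertex_case[OF sg t3 Q(1) maxQ this conjunct1[OF ih]]
      then show ?thesis by simp
    qed
    show ?thesis
    proof (cases "2 * card (nbrs E (hd P)) \<le> L")
      case True then show ?thesis using vcase[OF P refl] by simp
    next
      case F1: False
      show ?thesis
      proof (cases "2 * card (nbrs E (last P)) \<le> L")
        case True
        have "hd (rev P) = last P" using Pne by (simp add: hd_rev)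
        then show ?thesis using vcase[OF path_rev[OF P]] True by simp
      next
        case F2: False
        define x where "x = hd P"
        define y where "y = last P"
        define A where "A = {i. i < L \<and> adj E x (P ! Suc i)}"
        define B where "B = {i. i < L \<and> adj E y (P ! i)}"
        have lP: "length P = Suc L" using Pne unfolding L_def by simp
        have hdP: "P ! 0 = x" using Pne unfolding x_def by (simp add: hd_conv_nth)
        have lastP: "P ! L = y" using Pne unfolding y_def L_def by (simp add: last_conv_nth)
        have nA: "nbrs E x \<subseteq> (\<lambda>i. P ! Suc i) ` A"
        proof
          fix z assume "z \<in> nbrs E x"
          then have a: "adj E x z" unfolding nbrs_def by simp
          then have "z \<in> set P" using end_nbr_in[OF P maxP sg] unfolding x_def by simp
          then obtain j where j: "j < length P" "P ! j = z" by (meson in_set_conv_nth)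
          have "j \<noteq> 0"
          proof
            assume "j = 0" then have "z = x" using j(2) hdP by simp
            then show False using sg_adj(3)[OF sg a] by simp
          qed
          then obtain i where i: "j = Suc i" using not0_implies_Suc by blast
          then have "i \<in> A" using j a lP unfolding A_def by simp
          then show "z \<in> (\<lambda>i. P ! Suc i) ` A" using i j by blast
        qed
        have nB: "nbrs E y \<subseteq> (\<lambda>i. P ! i) ` B"
        proof
          fix z assume "z \<in> nbrs E y"
          then have a: "adj E y z" unfolding nbrs_def by simp
          have "hd (rev P) = y" using Pne unfolding y_def by (simp add: hd_rev)
          then have "z \<in> set (rev P)" using end_nbr_in[OF path_rev[OF P] _ sg] a maxP by simp
          then have "z \<in> set P" by simp
          then obtain j where j: "j < length P" "P ! j = z" by (meson in_set_conv_nth)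
          have "j \<noteq> L" using sg_adj(3)[OF sg a] j(2) lastP by auto
          then have "j < L" using j(1) lP by simp
          then have "j \<in> B" using j a unfolding B_def by simp
          then show "z \<in> (\<lambda>i. P ! i) ` B" using j by blast
        qed
        have finA: "finite A" and finB: "finite B" unfolding A_def B_def by auto
        have cA: "card (nbrs E x) \<le> card A"
          using card_mono[OF finite_imageI[OF finA] nA] card_image_le[OF finA, of "\<lambda>i. P ! Suc i"] by linarith
        have cB: "card (nbrs E y) \<le> card B"
          using card_mono[OF finite_imageI[OF finB] nB] card_image_le[OF finB, of "\<lambda>i. P ! i"] by linarith
        have sum: "card A + card B > L" using cA cB F1 F2 unfolding x_def y_def by linarith
        have "A \<inter> B \<noteq> {}"
        proof
          assume dis: "A \<inter> B = {}"
          have "A \<union> B \<subseteq> {..<L}" unfolding A_def B_def by auto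
          then have "card (A \<union> B) \<le> L" using card_mono[of "{..<L}"] by fastforce
          moreover have "card (A \<union> B) = card A + card B" using card_Un_disjoint[OF finA finB dis] .
          ultimately show False using sum by simp
        qed
        then obtain i where i: "i \<in> A" "i \<in> B" by blast
        have iL: "Suc i < length P" using i(1) lP unfolding A_def by simp
        have a1: "adj E (hd P) (P ! Suc i)" using i(1) unfolding A_def x_def by simp
        have a2: "adj E (last P) (P ! i)" using i(2) unfolding B_def y_def by simp
        note cyc = cycle_from_path[OF P iL a1 a2]
        have "set P \<subseteq> V" "set P \<noteq> {}" using PV Pne by auto
        note ih = IHd[OF this]
        show ?thesis using comp_case[OF sg t3 P maxP lenP cyc ih] .
      qed
    qed
  qed
qed

lemma cl_two:
  assumes sg: "simple_graph V E"
  shows "cl V E 2 = E"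
proof
  show "cl V E 2 \<subseteq> E"
  proof
    fix S assume S: "S \<in> cl V E 2"
    then have cS: "card S = 2" and cp: "is_complete_on E S" unfolding cl_def by auto
    then obtain a b where ab: "S = {a,b}" "a \<noteq> b" by (auto simp: card_2_iff)
    then have "adj E a b" using completeD[OF cp] by simp
    then show "S \<in> E" using ab unfolding adj_def by simp
  qed
  show "E \<subseteq> cl V E 2"
  proof
    fix e assume e: "e \<in> E"
    obtain u v where uv: "e = {u,v}" "u \<noteq> v" "u \<in> V" "v \<in> V" "adj E u v" using sg_edge[OF sg e] .
    have "is_complete_on E e"
      unfolding is_complete_on_def
    proof (intro ballI impI)
      fix a b assume "a \<in> e" "b \<in> e" "a \<noteq> b"
      then have "{a,b} = e" using uv(1) by auto
      then show "adj E a b" using e unfolding adj_def by simp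
    qed
    then show "e \<in> cl V E 2" using uv unfolding cl_def by auto
  qed
qed

theorem theorem3:
  fixes V :: "'a set" and E :: "'a set set" and t :: nat
  assumes "t \<ge> 2" and "simple_graph V E"
  defines "p \<equiv> longest_path_through V E"
  shows "(real (clique_count V E t)
           \<le> (\<Sum>e\<in>E. real (Suc (p e) choose t) / real (Suc (p e) choose 2)))
    \<and> ((\<Sum>e\<in>E. real (Suc (p e) choose t) / real (Suc (p e) choose 2))
           = (1 / real (t choose 2)) * (\<Sum>e\<in>E. real ((p e - 1) choose (t - 2))))
    \<and> (t = 2 \<longrightarrow> real (clique_count V E t)
           = (\<Sum>e\<in>E. real (Suc (p e) choose t) / real (Suc (p e) choose 2)))
    \<and> (t \<ge> 3 \<longrightarrow>
           (real (clique_count V E t)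
              = (\<Sum>e\<in>E. real (Suc (p e) choose t) / real (Suc (p e) choose 2)))
           \<longleftrightarrow> (\<forall>C\<in>components V E. is_complete_on E C \<or> \<not> has_path_of_length_in V E C (t - 1)))"
proof -
  note sg = assms(2)
  have p1: "1 \<le> p e" if "e \<in> E" for e unfolding p_def using lpt_pos[OF sg that] .
  have SS: "(\<Sum>e\<in>E. real (Suc (p e) choose t) / real (Suc (p e) choose 2)) = Ssum V E t"
    unfolding Ssum_def Fr_def p_def ..
  have ident: "(\<Sum>e\<in>E. real (Suc (p e) choose t) / real (Suc (p e) choose 2))
           = (1 / real (t choose 2)) * (\<Sum>e\<in>E. real ((p e - 1) choose (t - 2)))"
  proof -
    have "(\<Sum>e\<in>E. real (Suc (p e) choose t) / real (Suc (p e) choose 2))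
        = (\<Sum>e\<in>E. real ((p e - 1) choose (t - 2)) / real (t choose 2))"
      using Fr_alt[OF assms(1)] p1 unfolding Fr_def by (intro sum.cong) auto
    also have "\<dots> = (1 / real (t choose 2)) * (\<Sum>e\<in>E. real ((p e - 1) choose (t - 2)))"
      by (simp add: sum_divide_distrib)
    finally show ?thesis .
  qed
  have CC: "clique_count V E t = card (cl V E t)" by (rule clique_count_cl)
  show ?thesis
  proof (cases "t = 2")
    case True
    have "(\<Sum>e\<in>E. real (Suc (p e) choose t) / real (Suc (p e) choose 2)) = (\<Sum>e\<in>E. 1)"
    proof (intro sum.cong refl)
      fix e assume "e \<in> E"
      then have "0 < Suc (p e) choose 2" using p1 by simp
      then show "real (Suc (p e) choose t) / real (Suc (p e) choose 2) = 1" using True by simp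
    qed
    moreover have "clique_count V E t = card E" using CC cl_two[OF sg] True by simp
    ultimately show ?thesis using ident True by simp
  next
    case False
    then have t3: "t \<ge> 3" using assms(1) by simp
    note m = main[OF t3 sg]
    show ?thesis using m ident False unfolding SS CC Prop_def by simp
  qed
qed

end
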